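(* Let $D\geq 3$ be an integer, let $n\geq 1$, and let $A\subset(\mathbb{Z}/D\mathbb{Z})^{n}$ be a sunflower-free set. Then \[ |A|\leq c_{D}^{n},\qquad\text{where } c_{D}=\frac{3}{2^{2/3}}(D-1)^{2/3}. \]
   Context: A set $A\subset(\mathbb{Z}/D\mathbb{Z})^{n}$ is called sunflower-free if for every triple of distinct elements $x,y,z\in A$ there exists a coordinate $i\in\{1,\dots,n\}$ such that exactly two of $x_i,y_i,z_i$ are equal. (Equivalently, $A$ contains no three distinct vectors which, in every coordinate, are either all equal or all pairwise different.) *)

theory Defs
  imports Complex_Main
begin

text \<open>The group (Z/DZ)^n, represented as functions nat => nat whose values at
  coordinates i < n lie in {0..<D} (residues), and which are 0 outside {0..<n}.\<close>
definition ZDn :: "nat \<Rightarrow> nat \<Rightarrow> (nat \<Rightarrow> nat) set" where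
  "ZDn D n = {x. (\<forall>i<n. x i < D) \<and> (\<forall>i\<ge>n. x i = 0)}"

definition sunflower_free :: "nat \<Rightarrow> (nat \<Rightarrow> nat) set \<Rightarrow> bool" where
  "sunflower_free n A \<longleftrightarrow>
     (\<forall>x\<in>A. \<forall>y\<in>A. \<forall>z\<in>A. x \<noteq> y \<and> y \<noteq> z \<and> x \<noteq> z \<longrightarrow>
        (\<exists>i<n. (x i = y i \<and> y i \<noteq> z i) \<or> (x i = z i \<and> x i \<noteq> y i)
               \<or> (y i = z i \<and> x i \<noteq> y i)))"

end

theory Submission
  imports Defs "HOL-Library.FuncSet"
begin

lemma pivot:
  fixes A :: "'a set" and F :: "('a \<Rightarrow> real) set"
  assumes "finite F"
  shows "\<exists>B\<subseteq>A. finite B \<and> card B \<le> card F \<and>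
     (\<forall>a\<in>A-B. \<exists>h. (\<forall>f\<in>F. (\<Sum>z\<in>A. f z * h z) = 0) \<and> (\<forall>z\<in>A-B. h z = (if z = a then 1 else 0)))"
  using assms
proof (induction F rule: finite_induct)
  case empty
  show ?case by (rule exI[of _ "{}"]) (auto intro!: exI[of _ "\<lambda>z. if z = a then 1 else 0" for a])
next
  case (insert f F)
  then obtain B where B: "B \<subseteq> A" "finite B" "card B \<le> card F"
    and H: "\<forall>a\<in>A-B. \<exists>h. (\<forall>f\<in>F. (\<Sum>z\<in>A. f z * h z) = 0) \<and> (\<forall>z\<in>A-B. h z = (if z = a then 1 else 0))"
    by blast
  obtain hh where hh: "\<And>a. a\<in>A-B \<Longrightarrow> (\<forall>f\<in>F. (\<Sum>z\<in>A. f z * hh a z) = 0) \<and> (\<forall>z\<in>A-B. hh a z = (if z = a then 1 else 0))"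
    using H by metis
  define s where "s a = (\<Sum>z\<in>A. f z * hh a z)" for a
  show ?case
  proof (cases "\<forall>a\<in>A-B. s a = 0")
    case True
    show ?thesis
      apply (rule exI[of _ B])
      using B insert.hyps hh True unfolding s_def by (auto intro!: exI[of _ "hh a" for a])
  next
    case False
    then obtain a0 where a0: "a0 \<in> A - B" "s a0 \<noteq> 0" by blast
    show ?thesis
    proof (rule exI[of _ "insert a0 B"], intro conjI ballI)
      show "insert a0 B \<subseteq> A" "finite (insert a0 B)" using a0 B by auto
      show "card (insert a0 B) \<le> card (insert f F)"
        using B insert.hyps by (simp add: card_insert_if)
      fix a assume a: "a \<in> A - insert a0 B"
      define h where "h z = hh a z - (s a / s a0) * hh a0 z" for z
      show "\<exists>h. (\<forall>f\<in>insert f F. (\<Sum>z\<in>A. f z * h z) = 0) \<and> (\<forall>z\<in>A - insert a0 B. h z = (if z = a then 1 else 0))"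
      proof (rule exI[of _ h], intro conjI ballI)
        fix g assume g: "g \<in> insert f F"
        have "(\<Sum>z\<in>A. g z * h z) = (\<Sum>z\<in>A. g z * hh a z) - (s a / s a0) * (\<Sum>z\<in>A. g z * hh a0 z)"
          unfolding h_def by (simp add: algebra_simps sum_subtractf sum_distrib_left)
        then show "(\<Sum>z\<in>A. g z * h z) = 0"
          using g hh[of a] hh[of a0] a a0 unfolding s_def by auto
      next
        fix z assume z: "z \<in> A - insert a0 B"
        then show "h z = (if z = a then 1 else 0)"
          using hh[of a] hh[of a0] a a0 unfolding h_def by auto
      qed
    qed
  qed
qed



lemma pivot_obt:
  fixes A :: "'a set" and F :: "('a \<Rightarrow> real) set"
  assumes "finite F"
  obtains B where "B \<subseteq> A" "finite B" "card B \<le> card F"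
     "\<forall>a\<in>A-B. \<exists>h. (\<forall>f\<in>F. (\<Sum>z\<in>A. f z * h z) = 0) \<and> (\<forall>z\<in>A-B. h z = (if z = a then 1 else 0))"
  using pivot[OF assms, of A]
  apply (elim exE conjE)
  apply (rule that)
     apply assumption+
  done

lemma sum_mult4: "(\<Sum>i\<in>I. a i) * p * q * (r::real) = (\<Sum>i\<in>I. a i * p * q * r)"
  by (simp add: sum_distrib_right)

lemma swap3: "(\<Sum>y\<in>Y. \<Sum>z\<in>Z. \<Sum>i\<in>I. f i y z) = (\<Sum>i\<in>I. \<Sum>y\<in>Y. \<Sum>z\<in>Z. f i y z)"
proof -
  have "(\<Sum>y\<in>Y. \<Sum>z\<in>Z. \<Sum>i\<in>I. f i y z) = (\<Sum>y\<in>Y. \<Sum>i\<in>I. \<Sum>z\<in>Z. f i y z)"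
    by (rule sum.cong[OF refl], rule sum.swap)
  also have "\<dots> = (\<Sum>i\<in>I. \<Sum>y\<in>Y. \<Sum>z\<in>Z. f i y z)" by (rule sum.swap)
  finally show ?thesis .
qed

lemma slice:
  fixes A :: "'a set" and c :: "'a \<Rightarrow> real"
    and f1 :: "'i1 \<Rightarrow> 'a \<Rightarrow> real" and f2 :: "'i2 \<Rightarrow> 'a \<Rightarrow> real" and f3 :: "'i3 \<Rightarrow> 'a \<Rightarrow> real"
  assumes finA: "finite A" and fin: "finite I1" "finite I2" "finite I3"
    and cnz: "\<forall>x\<in>A. c x \<noteq> 0"
    and T: "\<forall>x\<in>A. \<forall>y\<in>A. \<forall>z\<in>A. (if x = y \<and> y = z then c x else 0) =
       (\<Sum>i\<in>I1. f1 i x * g1 i y z) + (\<Sum>i\<in>I2. f2 i y * g2 i x z) + (\<Sum>i\<in>I3. f3 i z * g3 i x y)"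
  shows "card A \<le> card (f1 ` I1) + card (f2 ` I2) + card (f3 ` I3)"
proof -
  obtain B3 where B3: "B3 \<subseteq> A" "finite B3" "card B3 \<le> card (f3 ` I3)"
    and H3: "\<forall>a\<in>A-B3. \<exists>h. (\<forall>f\<in>f3 ` I3. (\<Sum>z\<in>A. f z * h z) = 0) \<and> (\<forall>z\<in>A-B3. h z = (if z = a then 1 else 0))"
    by (rule pivot_obt[OF finite_imageI[OF fin(3)], of A])
  define S3 where "S3 = A - B3"
  obtain B2 where B2: "B2 \<subseteq> S3" "finite B2" "card B2 \<le> card (f2 ` I2)"
    and H2: "\<forall>a\<in>S3-B2. \<exists>h. (\<forall>f\<in>f2 ` I2. (\<Sum>z\<in>S3. f z * h z) = 0) \<and> (\<forall>z\<in>S3-B2. h z = (if z = a then 1 else 0))"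
    by (rule pivot_obt[OF finite_imageI[OF fin(2)], of S3])
  define S2 where "S2 = S3 - B2"
  obtain B1 where B1: "B1 \<subseteq> S2" "finite B1" "card B1 \<le> card (f1 ` I1)"
    and H1: "\<forall>a\<in>S2-B1. \<exists>h. (\<forall>f\<in>f1 ` I1. (\<Sum>z\<in>S2. f z * h z) = 0) \<and> (\<forall>z\<in>S2-B1. h z = (if z = a then 1 else 0))"
    by (rule pivot_obt[OF finite_imageI[OF fin(1)], of S2])
  have S2sub: "S2 \<subseteq> S3" "S3 \<subseteq> A" unfolding S2_def S3_def by auto
  have finS3: "finite S3" using finite_subset[OF S2sub(2) finA] .
  have finS: "finite S2" "finite S3" using finite_subset[OF S2sub(1) finS3] finS3 by auto
  have "S2 - B1 = {}"
  proof (rule ccontr)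
    assume "S2 - B1 \<noteq> {}"
    then obtain e where e: "e \<in> S2 - B1" by blast
    then have eS3: "e \<in> S3 - B2" "e \<in> A - B3" unfolding S2_def S3_def by auto
    obtain h where h: "\<forall>f\<in>f3 ` I3. (\<Sum>z\<in>A. f z * h z) = 0" "\<forall>z\<in>A-B3. h z = (if z = e then 1 else 0)"
      using H3 eS3(2) by blast
    obtain h' where h': "\<forall>f\<in>f2 ` I2. (\<Sum>z\<in>S3. f z * h' z) = 0" "\<forall>z\<in>S3-B2. h' z = (if z = e then 1 else 0)"
      using H2 eS3(1) by blast
    obtain h'' where h'': "\<forall>f\<in>f1 ` I1. (\<Sum>z\<in>S2. f z * h'' z) = 0" "\<forall>z\<in>S2-B1. h'' z = (if z = e then 1 else 0)"
      using H1 e by blast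
    define TT where "TT x y z = (if x = y \<and> y = z then c x else 0)" for x y z
    define Q where "Q = (\<Sum>x\<in>S2. \<Sum>y\<in>S3. \<Sum>z\<in>A. TT x y z * h z * h' y * h'' x)"
    have Q1: "Q = c e"
    proof -
      have "\<And>x y. x \<in> A \<Longrightarrow> (\<Sum>z\<in>A. TT x y z * h z * h' y * h'' x) = (if x = y then c x * h x * h' x * h'' x else 0)"
      proof -
        fix x y assume "x \<in> A"
        have "\<And>z. TT x y z * h z * h' y * h'' x = (if z = x then (if x = y then c x * h x * h' x * h'' x else 0) else 0)"
          unfolding TT_def by auto
        then show "(\<Sum>z\<in>A. TT x y z * h z * h' y * h'' x) = (if x = y then c x * h x * h' x * h'' x else 0)"
          using finA \<open>x \<in> A\<close> by (simp add: sum.delta)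
      qed
      then have "Q = (\<Sum>x\<in>S2. \<Sum>y\<in>S3. (if x = y then c x * h x * h' x * h'' x else 0))"
        unfolding Q_def using S2sub by (intro sum.cong) auto
      also have "\<dots> = (\<Sum>x\<in>S2. c x * h x * h' x * h'' x)"
        using S2sub finS by (intro sum.cong) (auto simp: sum.delta)
      also have "\<dots> = (\<Sum>x\<in>S2. if x = e then c e * h' e * h'' e else 0)"
        using h S2sub unfolding S2_def S3_def by (intro sum.cong) auto
      also have "\<dots> = c e"
        using e finS eS3 h' h'' by (simp add: sum.delta)
      finally show ?thesis .
    qed
    have Q0: "Q = 0"
    proof -
      have P3: "(\<Sum>z\<in>A. (\<Sum>i\<in>I3. f3 i z * g3 i x y) * h z * h' y * h'' x) = 0" for x y
      proof -
        have "(\<Sum>z\<in>A. (\<Sum>i\<in>I3. f3 i z * g3 i x y) * h z * h' y * h'' x)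
            = (\<Sum>z\<in>A. \<Sum>i\<in>I3. (g3 i x y * h' y * h'' x) * (f3 i z * h z))"
          by (simp only: sum_mult4) (intro sum.cong refl, simp add: mult_ac)
        also have "\<dots> = (\<Sum>i\<in>I3. (g3 i x y * h' y * h'' x) * (\<Sum>z\<in>A. f3 i z * h z))"
          by (subst sum.swap) (simp add: sum_distrib_left)
        also have "\<dots> = 0" using h(1) by simp
        finally show ?thesis .
      qed
      have P2: "(\<Sum>y\<in>S3. \<Sum>z\<in>A. (\<Sum>i\<in>I2. f2 i y * g2 i x z) * h z * h' y * h'' x) = 0" for x
      proof -
        have "(\<Sum>y\<in>S3. \<Sum>z\<in>A. (\<Sum>i\<in>I2. f2 i y * g2 i x z) * h z * h' y * h'' x)
            = (\<Sum>y\<in>S3. \<Sum>z\<in>A. \<Sum>i\<in>I2. (g2 i x z * h z * h'' x) * (f2 i y * h' y))"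
          by (simp only: sum_mult4) (intro sum.cong refl, simp add: mult_ac)
        also have "\<dots> = (\<Sum>y\<in>S3. \<Sum>i\<in>I2. (\<Sum>z\<in>A. g2 i x z * h z * h'' x) * (f2 i y * h' y))"
          by (intro sum.cong refl, subst sum.swap) (simp add: sum_distrib_right)
        also have "\<dots> = (\<Sum>i\<in>I2. (\<Sum>z\<in>A. g2 i x z * h z * h'' x) * (\<Sum>y\<in>S3. f2 i y * h' y))"
          by (subst sum.swap) (simp add: sum_distrib_left)
        also have "\<dots> = 0" using h'(1) by simp
        finally show ?thesis .
      qed
      have P1: "(\<Sum>x\<in>S2. \<Sum>y\<in>S3. \<Sum>z\<in>A. (\<Sum>i\<in>I1. f1 i x * g1 i y z) * h z * h' y * h'' x) = 0"
      proof -
        have "(\<Sum>x\<in>S2. \<Sum>y\<in>S3. \<Sum>z\<in>A. (\<Sum>i\<in>I1. f1 i x * g1 i y z) * h z * h' y * h'' x)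
            = (\<Sum>x\<in>S2. \<Sum>y\<in>S3. \<Sum>z\<in>A. \<Sum>i\<in>I1. (g1 i y z * h z * h' y) * (f1 i x * h'' x))"
          by (simp only: sum_mult4) (intro sum.cong refl, simp add: mult_ac)
        also have "\<dots> = (\<Sum>x\<in>S2. \<Sum>i\<in>I1. (\<Sum>y\<in>S3. \<Sum>z\<in>A. g1 i y z * h z * h' y) * (f1 i x * h'' x))"
          apply (intro sum.cong refl)
          apply (subst swap3)
          apply (simp add: sum_distrib_right)
          done
        also have "\<dots> = (\<Sum>i\<in>I1. (\<Sum>y\<in>S3. \<Sum>z\<in>A. g1 i y z * h z * h' y) * (\<Sum>x\<in>S2. f1 i x * h'' x))"
          by (subst sum.swap) (simp add: sum_distrib_left)
        also have "\<dots> = 0" using h''(1) by simp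
        finally show ?thesis .
      qed
      have "Q = (\<Sum>x\<in>S2. \<Sum>y\<in>S3. \<Sum>z\<in>A.
           (\<Sum>i\<in>I1. f1 i x * g1 i y z) * h z * h' y * h'' x
         + (\<Sum>i\<in>I2. f2 i y * g2 i x z) * h z * h' y * h'' x
         + (\<Sum>i\<in>I3. f3 i z * g3 i x y) * h z * h' y * h'' x)"
        unfolding Q_def
      proof (intro sum.cong refl)
        fix x y z assume xyz: "x \<in> S2" "y \<in> S3" "z \<in> A"
        then have "x \<in> A" "y \<in> A" using S2sub by auto
        then have "TT x y z = (\<Sum>i\<in>I1. f1 i x * g1 i y z) + (\<Sum>i\<in>I2. f2 i y * g2 i x z) + (\<Sum>i\<in>I3. f3 i z * g3 i x y)"
          unfolding TT_def using T xyz(3) by blast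
        then show "TT x y z * h z * h' y * h'' x = (\<Sum>i\<in>I1. f1 i x * g1 i y z) * h z * h' y * h'' x
         + (\<Sum>i\<in>I2. f2 i y * g2 i x z) * h z * h' y * h'' x
         + (\<Sum>i\<in>I3. f3 i z * g3 i x y) * h z * h' y * h'' x"
          by (simp add: distrib_right)
      qed
      also have "\<dots> = 0"
        by (simp add: sum.distrib P1 P2 P3)
      finally show ?thesis .
    qed
    show False using Q0 Q1 cnz e S2sub by auto
  qed
  then have "A \<subseteq> B1 \<union> B2 \<union> B3" unfolding S2_def S3_def by blast
  then have "card A \<le> card (B1 \<union> B2 \<union> B3)" using B1 B2 B3 by (intro card_mono) auto
  also have "\<dots> \<le> card B1 + card B2 + card B3"
    using card_Un_le[of "B1 \<union> B2" B3] card_Un_le[of B1 B2] by linarith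
  finally show ?thesis using B1 B2 B3 by linarith
qed



definition EE :: "nat \<Rightarrow> nat \<Rightarrow> real" where
  "EE a u = (if a = 0 then 1 else if u = a then 1 else 0)"

definition lam :: "(nat \<Rightarrow> real) \<Rightarrow> nat \<Rightarrow> real" where
  "lam \<psi> a = (if a = 0 then \<psi> 0 else \<psi> a - \<psi> 0)"

lemma one_var:
  assumes "\<alpha> < D"
  shows "\<psi> \<alpha> = (\<Sum>a<D. lam \<psi> a * EE a \<alpha>)"
proof -
  obtain D' where D: "D = Suc D'" using assms by (cases D) auto
  have "(\<Sum>a<D. lam \<psi> a * EE a \<alpha>) = \<psi> 0 + (\<Sum>a<D'. (\<psi> (Suc a) - \<psi> 0) * (if \<alpha> = Suc a then 1 else 0))"
    unfolding D sum.lessThan_Suc_shift by (simp add: lam_def EE_def)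
  also have "\<dots> = \<psi> 0 + (\<Sum>a<D'. if a = \<alpha> - 1 then (if \<alpha> = 0 then 0 else \<psi> \<alpha> - \<psi> 0) else 0)"
    by (intro arg_cong2[where f="(+)"] refl sum.cong) auto
  also have "\<dots> = \<psi> \<alpha>"
    using assms D by (cases "\<alpha> = 0") (auto simp: sum.delta)
  finally show ?thesis by simp
qed

definition mu :: "(nat \<Rightarrow> nat \<Rightarrow> real) \<Rightarrow> nat \<Rightarrow> nat \<Rightarrow> real" where
  "mu \<phi> a b = lam (\<lambda>\<beta>. lam (\<lambda>\<alpha>. \<phi> \<alpha> \<beta>) a) b"

lemma two_var:
  assumes "\<alpha> < D" "\<beta> < D"
  shows "\<phi> \<alpha> \<beta> = (\<Sum>a<D. \<Sum>b<D. mu \<phi> a b * EE a \<alpha> * EE b \<beta>)"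
proof -
  have "\<phi> \<alpha> \<beta> = (\<Sum>a<D. lam (\<lambda>\<alpha>. \<phi> \<alpha> \<beta>) a * EE a \<alpha>)"
    using one_var[OF assms(1), of "\<lambda>\<alpha>. \<phi> \<alpha> \<beta>"] .
  also have "\<dots> = (\<Sum>a<D. (\<Sum>b<D. mu \<phi> a b * EE b \<beta>) * EE a \<alpha>)"
    unfolding mu_def by (intro sum.cong refl arg_cong2[where f="(*)"]) (rule one_var[OF assms(2)])
  also have "\<dots> = (\<Sum>a<D. \<Sum>b<D. mu \<phi> a b * EE a \<alpha> * EE b \<beta>)"
    by (simp add: sum_distrib_left sum_distrib_right mult_ac)
  finally show ?thesis .
qed

definition g3 :: "nat \<Rightarrow> nat \<Rightarrow> nat \<Rightarrow> real" where
  "g3 \<alpha> \<beta> \<gamma> = 1 - (if \<alpha> = \<beta> then 1 else 0) - (if \<beta> = \<gamma> then 1 else 0) - (if \<alpha> = \<gamma> then 1 else 0)"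

definition eqf :: "nat \<Rightarrow> nat \<Rightarrow> real" where "eqf \<alpha> \<beta> = (if \<alpha> = \<beta> then 1 else 0)"

definition co :: "nat \<times> nat \<times> nat \<Rightarrow> real" where
  "co k = (case k of (t,a,b) \<Rightarrow> if t = 0 then (if a = 0 \<and> b = 0 then 1 else 0) else - mu eqf a b)"
definition ea :: "nat \<times> nat \<times> nat \<Rightarrow> nat" where
  "ea k = (case k of (t,a,b) \<Rightarrow> if t = 1 \<or> t = 3 then a else 0)"
definition eb :: "nat \<times> nat \<times> nat \<Rightarrow> nat" where
  "eb k = (case k of (t,a,b) \<Rightarrow> if t = 1 then b else if t = 2 then a else 0)"
definition ec :: "nat \<times> nat \<times> nat \<Rightarrow> nat" where
  "ec k = (case k of (t,a,b) \<Rightarrow> if t = 2 \<or> t = 3 then b else 0)"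
definition KK :: "nat \<Rightarrow> (nat \<times> nat \<times> nat) set" where
  "KK D = {..<4} \<times> {..<D} \<times> {..<D}"

lemma e_zero: "ea k = 0 \<or> eb k = 0 \<or> ec k = 0"
  by (cases k) (auto simp: ea_def eb_def ec_def)

lemma e_lt: "k \<in> KK D \<Longrightarrow> D > 0 \<Longrightarrow> ea k < D \<and> eb k < D \<and> ec k < D"
  by (cases k) (auto simp: ea_def eb_def ec_def KK_def)

lemma g3_expand:
  assumes "\<alpha> < D" "\<beta> < D" "\<gamma> < D"
  shows "g3 \<alpha> \<beta> \<gamma> = (\<Sum>k\<in>KK D. co k * EE (ea k) \<alpha> * EE (eb k) \<beta> * EE (ec k) \<gamma>)"
proof -
  have D0: "0 \<in> {..<D}" using assms by auto
  define F where "F t a b = co (t,a,b) * EE (ea (t,a,b)) \<alpha> * EE (eb (t,a,b)) \<beta> * EE (ec (t,a,b)) \<gamma>" for t a b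
  have "(\<Sum>k\<in>KK D. co k * EE (ea k) \<alpha> * EE (eb k) \<beta> * EE (ec k) \<gamma>) = (\<Sum>t<4. \<Sum>a<D. \<Sum>b<D. F t a b)"
    unfolding KK_def F_def by (simp add: sum.cartesian_product)
  also have "\<dots> = (\<Sum>a<D. \<Sum>b<D. F 0 a b) + (\<Sum>a<D. \<Sum>b<D. F 1 a b) + (\<Sum>a<D. \<Sum>b<D. F 2 a b) + (\<Sum>a<D. \<Sum>b<D. F 3 a b)"
    by (simp add: numeral_eq_Suc)
  also have "(\<Sum>a<D. \<Sum>b<D. F 0 a b) = 1"
  proof -
    have "(\<Sum>a<D. \<Sum>b<D. F 0 a b) = (\<Sum>a<D. if a = 0 then (\<Sum>b<D. if b = 0 then 1 else 0) else 0)"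
      by (intro sum.cong refl) (auto simp: F_def co_def ea_def eb_def ec_def EE_def)
    also have "\<dots> = 1" using D0 by (simp add: sum.delta)
    finally show ?thesis .
  qed
  also have "(\<Sum>a<D. \<Sum>b<D. F 1 a b) = - eqf \<alpha> \<beta>"
    using two_var[OF assms(1,2), of eqf]
    by (simp add: F_def co_def ea_def eb_def ec_def EE_def sum_negf)
  also have "(\<Sum>a<D. \<Sum>b<D. F 2 a b) = - eqf \<beta> \<gamma>"
    using two_var[OF assms(2,3), of eqf]
    by (simp add: F_def co_def ea_def eb_def ec_def EE_def sum_negf)
  also have "(\<Sum>a<D. \<Sum>b<D. F 3 a b) = - eqf \<alpha> \<gamma>"
    using two_var[OF assms(1,3), of eqf]
    by (simp add: F_def co_def ea_def eb_def ec_def EE_def sum_negf)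
  finally show ?thesis by (simp add: g3_def eqf_def)
qed



definition mon :: "'i set \<Rightarrow> ('i \<Rightarrow> nat) \<Rightarrow> ('i \<Rightarrow> nat) \<Rightarrow> real" where
  "mon I p x = (\<Prod>i\<in>I. EE (p i) (x i))"
definition nz :: "'i set \<Rightarrow> ('i \<Rightarrow> nat) \<Rightarrow> nat" where
  "nz I p = (\<Sum>i\<in>I. if p i \<noteq> 0 then 1 else 0)"
definition TT :: "'i set \<Rightarrow> ('i \<Rightarrow> nat) \<Rightarrow> ('i \<Rightarrow> nat) \<Rightarrow> ('i \<Rightarrow> nat) \<Rightarrow> real" where
  "TT I x y z = (\<Prod>i\<in>I. g3 (x i) (y i) (z i))"
definition Cf :: "'i set \<Rightarrow> ('i \<Rightarrow> nat \<times> nat \<times> nat) \<Rightarrow> real" where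
  "Cf I \<tau> = (\<Prod>i\<in>I. co (\<tau> i))"

lemma TT_expand:
  assumes "finite I" "\<forall>i\<in>I. x i < D \<and> y i < D \<and> z i < D"
  shows "TT I x y z = (\<Sum>\<tau>\<in>PiE I (\<lambda>_. KK D). Cf I \<tau> * mon I (ea \<circ> \<tau>) x * mon I (eb \<circ> \<tau>) y * mon I (ec \<circ> \<tau>) z)"
proof -
  have finK: "finite (KK D)" unfolding KK_def by simp
  have "TT I x y z = (\<Prod>i\<in>I. \<Sum>k\<in>KK D. co k * EE (ea k) (x i) * EE (eb k) (y i) * EE (ec k) (z i))"
    unfolding TT_def using assms(2) by (intro prod.cong refl g3_expand) auto
  also have "\<dots> = (\<Sum>\<tau>\<in>PiE I (\<lambda>_. KK D). \<Prod>i\<in>I. co (\<tau> i) * EE (ea (\<tau> i)) (x i) * EE (eb (\<tau> i)) (y i) * EE (ec (\<tau> i)) (z i))"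
    using assms(1) finK by (rule prod_sum_PiE)
  also have "\<dots> = (\<Sum>\<tau>\<in>PiE I (\<lambda>_. KK D). Cf I \<tau> * mon I (ea \<circ> \<tau>) x * mon I (eb \<circ> \<tau>) y * mon I (ec \<circ> \<tau>) z)"
    unfolding Cf_def mon_def by (simp add: prod.distrib)
  finally show ?thesis .
qed

lemma nz_total: "finite I \<Longrightarrow> nz I (ea \<circ> \<tau>) + nz I (eb \<circ> \<tau>) + nz I (ec \<circ> \<tau>) \<le> 2 * card I"
proof -
  assume "finite I"
  have "nz I (ea \<circ> \<tau>) + nz I (eb \<circ> \<tau>) + nz I (ec \<circ> \<tau>) =
     (\<Sum>i\<in>I. (if ea (\<tau> i) \<noteq> 0 then 1 else 0) + (if eb (\<tau> i) \<noteq> 0 then 1 else 0) + (if ec (\<tau> i) \<noteq> 0 then 1 else 0))"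
    unfolding nz_def by (simp add: sum.distrib)
  also have "\<dots> \<le> (\<Sum>i\<in>I. 2)"
  proof (intro sum_mono)
    fix i
    show "(if ea (\<tau> i) \<noteq> 0 then 1 else 0) + (if eb (\<tau> i) \<noteq> 0 then 1 else 0) + (if ec (\<tau> i) \<noteq> 0 then 1 else (0::nat)) \<le> 2"
      using e_zero[of "\<tau> i"] by auto
  qed
  finally show ?thesis by simp
qed

definition PM :: "'i set \<Rightarrow> nat \<Rightarrow> ('i \<Rightarrow> nat) set" where
  "PM I D = {p \<in> PiE I (\<lambda>_. {..<D}). 3 * nz I p \<le> 2 * card I}"

lemma weight_sum:
  assumes "finite I" "D \<ge> 1"
  shows "(\<Sum>p\<in>PiE I (\<lambda>_. {..<D}). (t::real) ^ nz I p) = (1 + (real D - 1) * t) ^ card I"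
proof -
  obtain D' where D: "D = Suc D'" using assms by (cases D) auto
  have "(\<Sum>p\<in>PiE I (\<lambda>_. {..<D}). t ^ nz I p) = (\<Sum>p\<in>PiE I (\<lambda>_. {..<D}). \<Prod>i\<in>I. (if p i \<noteq> 0 then t else 1))"
    unfolding nz_def power_sum by (intro sum.cong refl prod.cong) auto
  also have "\<dots> = (\<Prod>i\<in>I. \<Sum>a<D. (if a \<noteq> 0 then t else 1))"
    using assms(1) by (rule prod_sum_PiE[symmetric]) auto
  also have "\<dots> = (\<Prod>i\<in>I. 1 + (real D - 1) * t)"
    unfolding D sum.lessThan_Suc_shift by simp
  finally show ?thesis by simp
qed

lemma count_PM:
  assumes "finite I" "D \<ge> 1" "0 < t" "t \<le> 1"
  shows "real (card (PM I D)) * t powr (2 * real (card I) / 3) \<le> (1 + (real D - 1) * t) ^ card I"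
proof -
  have finP: "finite (PiE I (\<lambda>_. {..<D}))" using assms(1) by (simp add: finite_PiE)
  have sub: "PM I D \<subseteq> PiE I (\<lambda>_. {..<D})" unfolding PM_def by auto
  have "real (card (PM I D)) * t powr (2 * real (card I) / 3) = (\<Sum>p\<in>PM I D. t powr (2 * real (card I) / 3))"
    by simp
  also have "\<dots> \<le> (\<Sum>p\<in>PM I D. t ^ nz I p)"
  proof (intro sum_mono)
    fix p assume "p \<in> PM I D"
    then have "real (nz I p) \<le> 2 * real (card I) / 3" unfolding PM_def by auto
    then have "t powr (2 * real (card I) / 3) \<le> t powr real (nz I p)"
      using assms(3,4) by (intro powr_mono') auto
    then show "t powr (2 * real (card I) / 3) \<le> t ^ nz I p"
      using assms(3) by (simp add: powr_realpow)
  qed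
  also have "\<dots> \<le> (\<Sum>p\<in>PiE I (\<lambda>_. {..<D}). t ^ nz I p)"
    using finP sub assms(3) by (intro sum_mono2) auto
  also have "\<dots> = (1 + (real D - 1) * t) ^ card I"
    using weight_sum[OF assms(1,2)] .
  finally show ?thesis .
qed



definition sfI :: "'i set \<Rightarrow> ('i \<Rightarrow> nat) set \<Rightarrow> bool" where
  "sfI I A \<longleftrightarrow> (\<forall>x\<in>A. \<forall>y\<in>A. \<forall>z\<in>A. x \<noteq> y \<and> y \<noteq> z \<and> x \<noteq> z \<longrightarrow>
      (\<exists>i\<in>I. (x i = y i \<and> y i \<noteq> z i) \<or> (x i = z i \<and> x i \<noteq> y i) \<or> (y i = z i \<and> x i \<noteq> y i)))"

lemma mon_in_PM:
  assumes "finite I" "\<tau> \<in> PiE I (\<lambda>_. KK D)" "3 * nz I (e \<circ> \<tau>) \<le> 2 * card I" "\<forall>k\<in>KK D. e k < D"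
  shows "mon I (e \<circ> \<tau>) \<in> mon I ` PM I D"
proof
  let ?p = "restrict (e \<circ> \<tau>) I"
  show "mon I (e \<circ> \<tau>) = mon I ?p" unfolding mon_def by (intro ext prod.cong) auto
  have "nz I ?p = nz I (e \<circ> \<tau>)" unfolding nz_def by (intro sum.cong) auto
  moreover have "?p \<in> PiE I (\<lambda>_. {..<D})" using assms(2,4) by (auto simp: PiE_def Pi_def)
  ultimately show "?p \<in> PM I D" using assms(3) unfolding PM_def by auto
qed

lemma g3_zero: "(a = b \<and> b \<noteq> c) \<or> (a = c \<and> a \<noteq> b) \<or> (b = c \<and> a \<noteq> b) \<Longrightarrow> g3 a b c = 0"
  unfolding g3_def by auto

lemma TT_diag:
  assumes "finite I" "sfI I A" "\<forall>x\<in>A. \<forall>y\<in>A. x \<noteq> y \<longrightarrow> (\<exists>i\<in>I. x i \<noteq> y i)"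
    and "x \<in> A" "y \<in> A" "z \<in> A"
  shows "(if x = y \<and> y = z then (- 2) ^ card I else 0) = TT I x y z"
proof (cases "x = y \<and> y = z")
  case True
  then show ?thesis unfolding TT_def g3_def by simp
next
  case False
  have "\<exists>i\<in>I. (x i = y i \<and> y i \<noteq> z i) \<or> (x i = z i \<and> x i \<noteq> y i) \<or> (y i = z i \<and> x i \<noteq> y i)"
  proof (cases "x \<noteq> y \<and> y \<noteq> z \<and> x \<noteq> z")
    case True
    then show ?thesis using assms(2,4,5,6) unfolding sfI_def by blast
  next
    case F2: False
    show ?thesis
    proof (cases "x = y")
      case True
      then have "y \<noteq> z" using False by auto
      then obtain i where "i \<in> I" "y i \<noteq> z i" using assms(3,5,6) by blast
      then show ?thesis using True by auto
    next
      case xy: False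
      then obtain i where "i \<in> I" "x i \<noteq> y i" using assms(3,4,5) by blast
      then show ?thesis using F2 xy by auto
    qed
  qed
  then obtain i where "i \<in> I" "g3 (x i) (y i) (z i) = 0" using g3_zero by blast
  then have "TT I x y z = 0" unfolding TT_def using assms(1) by (intro prod_zero) auto
  then show ?thesis using False by simp
qed

lemma core:
  fixes I :: "'i set" and A :: "('i \<Rightarrow> nat) set"
  assumes finI: "finite I" and D3: "D \<ge> 3" and vals: "\<forall>x\<in>A. \<forall>i\<in>I. x i < D"
    and dist: "\<forall>x\<in>A. \<forall>y\<in>A. x \<noteq> y \<longrightarrow> (\<exists>i\<in>I. x i \<noteq> y i)"
    and sf: "sfI I A"
  shows "real (card A) \<le> 3 * (3 / 2 powr (2/3) * (real D - 1) powr (2/3)) ^ card I"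
proof -
  define N where "N = card I"
  have finA: "finite A"
  proof (rule inj_on_finite[of "\<lambda>x. restrict x I" A "PiE I (\<lambda>_. {..<D})"])
    show "inj_on (\<lambda>x. restrict x I) A"
    proof (rule inj_onI)
      fix x y assume "x \<in> A" "y \<in> A" "restrict x I = restrict y I"
      then show "x = y" using dist by (metis restrict_apply')
    qed
    show "(\<lambda>x. restrict x I) ` A \<subseteq> PiE I (\<lambda>_. {..<D})" using vals by auto
    show "finite (PiE I (\<lambda>_. {..<D}))" using finI by (simp add: finite_PiE)
  qed
  define P where "P = PiE I (\<lambda>_. KK D)"
  have finP: "finite P" unfolding P_def KK_def using finI by (simp add: finite_PiE)
  define G1 where "G1 = {\<tau>\<in>P. 3 * nz I (ea \<circ> \<tau>) \<le> 2 * N}"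
  define G2 where "G2 = {\<tau>\<in>P. \<not> 3 * nz I (ea \<circ> \<tau>) \<le> 2 * N \<and> 3 * nz I (eb \<circ> \<tau>) \<le> 2 * N}"
  define G3 where "G3 = {\<tau>\<in>P. \<not> 3 * nz I (ea \<circ> \<tau>) \<le> 2 * N \<and> \<not> 3 * nz I (eb \<circ> \<tau>) \<le> 2 * N}"
  have G3c: "3 * nz I (ec \<circ> \<tau>) \<le> 2 * N" if "\<tau> \<in> G3" for \<tau>
    using that nz_total[OF finI, of \<tau>] unfolding G3_def N_def by auto
  have PG: "P = G1 \<union> G2 \<union> G3" unfolding G1_def G2_def G3_def by auto
  have finG: "finite G1" "finite G2" "finite G3" using finP unfolding G1_def G2_def G3_def by auto
  define F where "F \<tau> x y z = Cf I \<tau> * mon I (ea \<circ> \<tau>) x * mon I (eb \<circ> \<tau>) y * mon I (ec \<circ> \<tau>) z" for \<tau> x y z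
  have split: "(\<Sum>\<tau>\<in>P. F \<tau> x y z) = (\<Sum>\<tau>\<in>G1. F \<tau> x y z) + (\<Sum>\<tau>\<in>G2. F \<tau> x y z) + (\<Sum>\<tau>\<in>G3. F \<tau> x y z)" for x y z
    unfolding PG using finG
    by (subst sum.union_disjoint, simp, simp, force simp: G1_def G2_def G3_def,
        subst sum.union_disjoint, simp, simp, force simp: G1_def G2_def G3_def, simp)
  have Teq: "\<forall>x\<in>A. \<forall>y\<in>A. \<forall>z\<in>A. (if x = y \<and> y = z then (\<lambda>_. (- 2::real) ^ card I) x else 0) =
       (\<Sum>\<tau>\<in>G1. mon I (ea \<circ> \<tau>) x * (Cf I \<tau> * mon I (eb \<circ> \<tau>) y * mon I (ec \<circ> \<tau>) z))
     + (\<Sum>\<tau>\<in>G2. mon I (eb \<circ> \<tau>) y * (Cf I \<tau> * mon I (ea \<circ> \<tau>) x * mon I (ec \<circ> \<tau>) z))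
     + (\<Sum>\<tau>\<in>G3. mon I (ec \<circ> \<tau>) z * (Cf I \<tau> * mon I (ea \<circ> \<tau>) x * mon I (eb \<circ> \<tau>) y))"
  proof (intro ballI)
    fix x y z assume xyz: "x \<in> A" "y \<in> A" "z \<in> A"
    have "(if x = y \<and> y = z then (- 2::real) ^ card I else 0) = TT I x y z"
      using TT_diag[OF finI sf dist xyz] .
    also have "\<dots> = (\<Sum>\<tau>\<in>P. F \<tau> x y z)"
      unfolding P_def F_def using TT_expand[OF finI, of x D y z] vals xyz by auto
    also have "\<dots> = (\<Sum>\<tau>\<in>G1. mon I (ea \<circ> \<tau>) x * (Cf I \<tau> * mon I (eb \<circ> \<tau>) y * mon I (ec \<circ> \<tau>) z))
     + (\<Sum>\<tau>\<in>G2. mon I (eb \<circ> \<tau>) y * (Cf I \<tau> * mon I (ea \<circ> \<tau>) x * mon I (ec \<circ> \<tau>) z))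
     + (\<Sum>\<tau>\<in>G3. mon I (ec \<circ> \<tau>) z * (Cf I \<tau> * mon I (ea \<circ> \<tau>) x * mon I (eb \<circ> \<tau>) y))"
      by (subst split) (simp add: F_def mult_ac)
    finally show "(if x = y \<and> y = z then (\<lambda>_. (- 2::real) ^ card I) x else 0) = \<dots>" by simp
  qed
  have c1: "card A \<le> card ((\<lambda>\<tau>. mon I (ea \<circ> \<tau>)) ` G1) + card ((\<lambda>\<tau>. mon I (eb \<circ> \<tau>)) ` G2) + card ((\<lambda>\<tau>. mon I (ec \<circ> \<tau>)) ` G3)"
    by (rule slice[OF finA finG _ Teq]) simp
  have D0: "D > 0" using D3 by auto
  have finPM: "finite (PM I D)" unfolding PM_def using finI by (auto simp: finite_PiE)
  have cG: "card ((\<lambda>\<tau>. mon I (e \<circ> \<tau>)) ` G) \<le> card (PM I D)"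
    if "G \<subseteq> P" "\<forall>\<tau>\<in>G. 3 * nz I (e \<circ> \<tau>) \<le> 2 * N" "\<forall>k\<in>KK D. e k < D" for G e
  proof -
    have "(\<lambda>\<tau>. mon I (e \<circ> \<tau>)) ` G \<subseteq> mon I ` PM I D"
      using that mon_in_PM[OF finI] unfolding P_def N_def by blast
    then have "card ((\<lambda>\<tau>. mon I (e \<circ> \<tau>)) ` G) \<le> card (mon I ` PM I D)"
      using finPM by (intro card_mono) auto
    also have "\<dots> \<le> card (PM I D)" by (rule card_image_le[OF finPM])
    finally show ?thesis .
  qed
  have el: "\<forall>k\<in>KK D. ea k < D" "\<forall>k\<in>KK D. eb k < D" "\<forall>k\<in>KK D. ec k < D"
    using e_lt[OF _ D0] by auto
  have "card ((\<lambda>\<tau>. mon I (ea \<circ> \<tau>)) ` G1) \<le> card (PM I D)"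
    by (rule cG[OF _ _ el(1)]) (auto simp: G1_def)
  moreover have "card ((\<lambda>\<tau>. mon I (eb \<circ> \<tau>)) ` G2) \<le> card (PM I D)"
    by (rule cG[OF _ _ el(2)]) (auto simp: G2_def)
  moreover have "card ((\<lambda>\<tau>. mon I (ec \<circ> \<tau>)) ` G3) \<le> card (PM I D)"
    by (rule cG[OF _ _ el(3)]) (use G3c in \<open>auto simp: G3_def\<close>)
  ultimately have "card A \<le> 3 * card (PM I D)"
    using c1 by linarith
  define t :: real where "t = 2 / (real D - 1)"
  define c where "c = 3 / 2 powr (2/3) * (real D - 1) powr (2/3)"
  have t0: "0 < t" "t \<le> 1" unfolding t_def using D3 by auto
  have cnt: "real (card (PM I D)) * t powr (2 * real N / 3) \<le> 3 ^ N"
  proof -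
    have "1 + (real D - 1) * t = 3" unfolding t_def using D3 by (simp add: field_simps)
    moreover have "D \<ge> 1" using D3 by auto
    ultimately show ?thesis using count_PM[OF finI _ t0, of D] unfolding N_def by simp
  qed
  have tp: "t powr (2 * real N / 3) = (t powr (2/3)) ^ N"
    using t0 by (simp add: powr_realpow[symmetric] powr_powr mult_ac)
  have ct: "c * t powr (2/3) = 3"
  proof -
    have "t powr (2/3) = 2 powr (2/3) / (real D - 1) powr (2/3)"
      unfolding t_def using D3 by (simp add: powr_divide)
    moreover have "(real D - 1) powr (2/3) > 0" "2 powr (2/3::real) > 0" using D3 by auto
    ultimately show ?thesis unfolding c_def by (simp add: field_simps)
  qed
  have tpos: "(t powr (2/3)) ^ N > 0" using t0 by simp
  have "real (card (PM I D)) * (t powr (2/3)) ^ N \<le> c ^ N * (t powr (2/3)) ^ N"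
    using cnt tp ct by (simp add: power_mult_distrib[symmetric])
  then have "real (card (PM I D)) \<le> c ^ N" using tpos by simp
  then show ?thesis using \<open>card A \<le> 3 * card (PM I D)\<close> unfolding c_def N_def by linarith
qed



lemma ex2_exists:
  assumes "sfI I A" "\<forall>x\<in>A. \<forall>y\<in>A. x \<noteq> y \<longrightarrow> (\<exists>i\<in>I. x i \<noteq> y i)"
    and "x \<in> A" "y \<in> A" "z \<in> A" "\<not> (x = y \<and> y = z)"
  shows "\<exists>i\<in>I. (x i = y i \<and> y i \<noteq> z i) \<or> (x i = z i \<and> x i \<noteq> y i) \<or> (y i = z i \<and> x i \<noteq> y i)"
proof (cases "x \<noteq> y \<and> y \<noteq> z \<and> x \<noteq> z")
  case True
  then show ?thesis using assms(1,3,4,5) unfolding sfI_def by blast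
next
  case F2: False
  show ?thesis
  proof (cases "x = y")
    case True
    then have "y \<noteq> z" using assms(6) by auto
    then obtain i where "i \<in> I" "y i \<noteq> z i" using assms(2,4,5) by blast
    then show ?thesis using True by auto
  next
    case xy: False
    then obtain i where "i \<in> I" "x i \<noteq> y i" using assms(2,3,4) by blast
    then show ?thesis using F2 xy by auto
  qed
qed

definition cat :: "nat \<Rightarrow> (nat \<Rightarrow> 'i \<Rightarrow> nat) \<Rightarrow> ('i \<times> nat \<Rightarrow> nat)" where
  "cat m xs = (\<lambda>(i, j). xs j i)"

lemma power_bound:
  fixes I :: "'i set" and A :: "('i \<Rightarrow> nat) set"
  assumes finI: "finite I" and D3: "D \<ge> 3" and vals: "\<forall>x\<in>A. \<forall>i\<in>I. x i < D"
    and dist: "\<forall>x\<in>A. \<forall>y\<in>A. x \<noteq> y \<longrightarrow> (\<exists>i\<in>I. x i \<noteq> y i)"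
    and sf: "sfI I A"
  shows "real (card A) ^ m \<le> 3 * ((3 / 2 powr (2/3) * (real D - 1) powr (2/3)) ^ card I) ^ m"
proof -
  define PA where "PA = PiE {..<m} (\<lambda>_. A)"
  define B where "B = cat m ` PA"
  define J where "J = I \<times> {..<m}"
  have inj: "inj_on (cat m) PA"
  proof (rule inj_onI)
    fix xs ys assume xs: "xs \<in> PA" and ys: "ys \<in> PA" and eq: "cat m xs = cat m ys"
    show "xs = ys"
    proof (rule PiE_ext[OF xs[unfolded PA_def] ys[unfolded PA_def]])
      fix j assume j: "j \<in> {..<m}"
      have "xs j \<in> A" "ys j \<in> A" using xs ys j unfolding PA_def by auto
      moreover have "\<forall>i\<in>I. xs j i = ys j i"
        using eq unfolding cat_def by (metis case_prod_conv)
      ultimately show "xs j = ys j" using dist by blast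
    qed
  qed
  have cardB: "card B = card A ^ m"
    unfolding B_def using card_image[OF inj] unfolding PA_def by (simp add: card_PiE)
  have valsB: "\<forall>b\<in>B. \<forall>ij\<in>J. b ij < D"
    unfolding B_def J_def PA_def cat_def using vals by auto
  have diffj: "\<exists>j<m. xs j \<noteq> ys j" if "xs \<in> PA" "ys \<in> PA" "xs \<noteq> ys" for xs ys
    using that PiE_ext[of xs "{..<m}" "\<lambda>_. A" ys] unfolding PA_def by auto
  have distB: "\<forall>b\<in>B. \<forall>b'\<in>B. b \<noteq> b' \<longrightarrow> (\<exists>ij\<in>J. b ij \<noteq> b' ij)"
  proof (intro ballI impI)
    fix b b' assume "b \<in> B" "b' \<in> B" "b \<noteq> b'"
    then obtain xs ys where xs: "xs \<in> PA" "ys \<in> PA" "b = cat m xs" "b' = cat m ys" "xs \<noteq> ys"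
      unfolding B_def by auto
    then obtain j where j: "j < m" "xs j \<noteq> ys j" using diffj by blast
    then have "xs j \<in> A" "ys j \<in> A" using xs unfolding PA_def by auto
    then obtain i where "i \<in> I" "xs j i \<noteq> ys j i" using dist j by blast
    then show "\<exists>ij\<in>J. b ij \<noteq> b' ij"
      using j xs unfolding J_def cat_def by (intro bexI[of _ "(i,j)"]) auto
  qed
  have sfB: "sfI J B"
    unfolding sfI_def
  proof (intro ballI impI)
    fix b1 b2 b3 assume b: "b1 \<in> B" "b2 \<in> B" "b3 \<in> B" "b1 \<noteq> b2 \<and> b2 \<noteq> b3 \<and> b1 \<noteq> b3"
    then obtain xs ys zs where xs: "xs \<in> PA" "ys \<in> PA" "zs \<in> PA" "b1 = cat m xs" "b2 = cat m ys" "b3 = cat m zs"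
      unfolding B_def by auto
    then have "xs \<noteq> ys" using b by auto
    then obtain j where j: "j < m" "xs j \<noteq> ys j" using diffj xs by blast
    then have "xs j \<in> A" "ys j \<in> A" "zs j \<in> A" using xs unfolding PA_def by auto
    then obtain i where i: "i \<in> I" "(xs j i = ys j i \<and> ys j i \<noteq> zs j i) \<or> (xs j i = zs j i \<and> xs j i \<noteq> ys j i) \<or> (ys j i = zs j i \<and> xs j i \<noteq> ys j i)"
      using ex2_exists[OF sf dist] j by blast
    show "\<exists>ij\<in>J. (b1 ij = b2 ij \<and> b2 ij \<noteq> b3 ij) \<or> (b1 ij = b3 ij \<and> b1 ij \<noteq> b2 ij) \<or> (b2 ij = b3 ij \<and> b1 ij \<noteq> b2 ij)"
      using i j xs unfolding J_def cat_def by (intro bexI[of _ "(i,j)"]) auto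
  qed
  have finJ: "finite J" unfolding J_def using finI by simp
  have "real (card B) \<le> 3 * (3 / 2 powr (2/3) * (real D - 1) powr (2/3)) ^ card J"
    by (rule core[OF finJ D3 valsB distB sfB])
  moreover have "card J = card I * m" unfolding J_def by (simp add: card_cartesian_product)
  ultimately show ?thesis using cardB by (simp add: power_mult)
qed

lemma limit_arg:
  fixes r K :: real
  assumes "K > 0" "\<And>m. r ^ m \<le> 3 * K ^ m"
  shows "r \<le> K"
proof (rule ccontr)
  assume "\<not> r \<le> K"
  then have "r / K > 1" using assms(1) by simp
  then obtain m where "3 < (r / K) ^ m" using real_arch_pow by blast
  then have "3 * K ^ m < r ^ m" using assms(1) by (simp add: power_divide field_simps)
  then show False using assms(2)[of m] by simp
qed


theorem theorem1p5:
  fixes D n :: nat and A :: "(nat \<Rightarrow> nat) set"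
  assumes "D \<ge> 3" and "n \<ge> 1"
    and "A \<subseteq> ZDn D n"
    and "sunflower_free n A"
  shows "real (card A) \<le> (3 / 2 powr (2/3) * (real D - 1) powr (2/3)) ^ n"
proof -
  have finI: "finite {..<n}" by simp
  have vals: "\<forall>x\<in>A. \<forall>i\<in>{..<n}. x i < D" using assms(3) unfolding ZDn_def by auto
  have dist: "\<forall>x\<in>A. \<forall>y\<in>A. x \<noteq> y \<longrightarrow> (\<exists>i\<in>{..<n}. x i \<noteq> y i)"
  proof (intro ballI impI)
    fix x y assume xy: "x \<in> A" "y \<in> A" "x \<noteq> y"
    show "\<exists>i\<in>{..<n}. x i \<noteq> y i"
    proof (rule ccontr)
      assume "\<not> (\<exists>i\<in>{..<n}. x i \<noteq> y i)"
      then have "\<forall>i. x i = y i" using xy assms(3) unfolding ZDn_def by (metis (mono_tags, lifting) lessThan_iff mem_Collect_eq not_le subsetD)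
      then show False using xy by auto
    qed
  qed
  have sf: "sfI {..<n} A" using assms(4) unfolding sfI_def sunflower_free_def Bex_def lessThan_iff by blast
  define c where "c = 3 / 2 powr (2/3) * (real D - 1) powr (2/3)"
  have cpos: "c > 0" unfolding c_def using assms(1) by auto
  have "\<And>m. real (card A) ^ m \<le> 3 * (c ^ n) ^ m"
    using power_bound[OF finI assms(1) vals dist sf] unfolding c_def by simp
  then show ?thesis using limit_arg[of "c ^ n" "real (card A)"] cpos unfolding c_def by simp
qed

end
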